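(* Let $0<q<1$. For $n\in\mathbb{N}$ put $x_n=\dfrac{q^n-q^{-n}}{q-q^{-1}}$, $x_0!=1$ and $x_n!=x_1x_2\cdots x_n$ for $n\geq 1$. Define the entire function $$\mathfrak{E}_q(t)=\sum_{n=0}^{\infty} q^{\frac{n(n+1)}{2}}\frac{t^n}{x_n!},$$ and for $t>0$ define $$g_q(t)=\frac{1}{\sqrt{2\pi\,|\ln q|}}\exp\!\left[-\frac{\left(\ln\frac{t}{\sqrt q}\right)^2}{2|\ln q|}\right].$$ Let $$w_q(t)=(q^{-1}-q)\sum_{j=0}^{\infty} g_q\!\left(t\,\frac{q^{-1}-q}{q^{2j}}\right)\mathfrak{E}_q\!\left(-\frac{q^{2j}}{q^{-1}-q}\right),\qquad t>0.$$ Then $w_q$ is a positive density on $(0,\infty)$ and for every $n\in\mathbb{N}$, $$x_n!=\int_0^{\infty} t^n\, w_q(t)\,dt .$$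
   Context: The numbers $x_n$ are the symmetric $q$-deformations of the nonnegative integers, and $x_n!$ their $q$-factorials. The claim is that $w_q(t)\,dt$ solves the Stieltjes moment problem for the sequence $(x_n!)_{n\in\mathbb{N}}$ with a positive (in particular probability, since $x_0!=1$) measure. *)

theory Defs
  imports "HOL-Analysis.Analysis"
begin

definition qnum :: "real \<Rightarrow> nat \<Rightarrow> real" where
  "qnum q n = (q ^ n - inverse q ^ n) / (q - inverse q)"

definition qfact :: "real \<Rightarrow> nat \<Rightarrow> real" where
  "qfact q n = (\<Prod>k\<in>{1..n}. qnum q k)"

definition qE :: "real \<Rightarrow> real \<Rightarrow> real" where
  "qE q t = (\<Sum>n. q ^ (n * (n + 1) div 2) * t ^ n / qfact q n)"

definition qg :: "real \<Rightarrow> real \<Rightarrow> real" where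
  "qg q t = 1 / sqrt (2 * pi * \<bar>ln q\<bar>) *
            exp (- ((ln (t / sqrt q))\<^sup>2) / (2 * \<bar>ln q\<bar>))"

definition qw_term :: "real \<Rightarrow> real \<Rightarrow> nat \<Rightarrow> real" where
  "qw_term q t j = qg q (t * (inverse q - q) / q ^ (2 * j)) *
                   qE q (- (q ^ (2 * j)) / (inverse q - q))"

definition qw :: "real \<Rightarrow> real \<Rightarrow> real" where
  "qw q t = (inverse q - q) * (\<Sum>j. qw_term q t j)"

end

theory Submission
  imports Defs "HOL-Probability.Distributions"
begin

definition PP :: "real \<Rightarrow> nat \<Rightarrow> real" where
  "PP q k = (\<Prod>i\<in>{1..k}. (1 - q ^ (2 * i)))"

definition bb :: "real \<Rightarrow> nat \<Rightarrow> real" where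
  "bb q k = (-1) ^ k * q ^ (k * (k - 1)) / PP q k"

definition FF :: "real \<Rightarrow> real \<Rightarrow> real" where
  "FF q z = (\<Sum>k. bb q k * z ^ k)"

lemma PP_Suc: "PP q (Suc k) = PP q k * (1 - q ^ (2 * Suc k))"
  unfolding PP_def by (simp add: prod.nat_ivl_Suc' mult.commute)

lemma PP_pos: assumes "0 < q" "q < 1" shows "PP q k > 0"
  unfolding PP_def
proof (rule prod_pos)
  fix i assume "i \<in> {1..k}"
  then have "q ^ (2*i) < 1" using assms by (subst power_less_one_iff) auto
  then show "0 < 1 - q ^ (2 * i)" by simp
qed

lemma tri_Suc: "Suc k * (Suc k + 1) div 2 = k * (k + 1) div 2 + Suc k"
proof -
  have "Suc k * (Suc k + 1) = k * (k + 1) + 2 * Suc k" by simp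
  then show ?thesis by simp
qed

lemma qfact_eq: assumes "0 < q" "q < 1"
  shows "qfact q k = inverse q ^ (k * (k + 1) div 2) * PP q k / (inverse q - q) ^ k"
proof (induction k)
  case 0 then show ?case by (simp add: qfact_def PP_def)
next
  case (Suc k)
  have "q*q < 1*1" using assms by (intro mult_strict_mono) auto
  then have c: "inverse q - q > 0" using assms
    by (simp add: field_simps)
  have qn: "qnum q (Suc k) = inverse q ^ Suc k * (1 - q ^ (2 * Suc k)) / (inverse q - q)"
  proof -
    have q0: "q \<noteq> 0" using assms by simp
    have e1: "inverse q ^ Suc k * q ^ Suc k = 1" by (subst power_inverse, rule left_inverse, simp add: q0)
    have e2: "q ^ (2 * Suc k) = q ^ Suc k * q ^ Suc k" by (simp add: mult_2 power_add)
    have "q ^ Suc k - inverse q ^ Suc k = - (inverse q ^ Suc k * (1 - q ^ (2 * Suc k)))"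
    proof -
      have "inverse q ^ Suc k * (q ^ Suc k * q ^ Suc k) = (inverse q ^ Suc k * q ^ Suc k) * q ^ Suc k"
        by (rule mult.assoc[symmetric])
      then have e3: "inverse q ^ Suc k * (q ^ Suc k * q ^ Suc k) = q ^ Suc k" unfolding e1 by simp
      show ?thesis unfolding e2 right_diff_distrib mult_1_right e3 by simp
    qed
    moreover have "q - inverse q = - (inverse q - q)" by simp
    ultimately show ?thesis unfolding qnum_def by (simp only: minus_divide_divide)
  qed
  have "qfact q (Suc k) = qfact q k * qnum q (Suc k)"
    unfolding qfact_def by (simp add: prod.nat_ivl_Suc')
  also have "\<dots> = inverse q ^ (Suc k * (Suc k + 1) div 2) * PP q (Suc k) / (inverse q - q) ^ Suc k"
    unfolding Suc.IH qn tri_Suc PP_Suc using c by (simp add: power_add field_simps)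
  finally show ?case .
qed

lemma nat_aux1: "Suc k * k = k * (k - 1) + 2 * k"
  by (cases k) (simp_all add: algebra_simps)

lemma bb_Suc: assumes "0 < q" "q < 1"
  shows "bb q (Suc k) = - bb q k * q ^ (2 * k) / (1 - q ^ (2 * Suc k))"
proof -
  have "q ^ (Suc k * (Suc k - 1)) = q ^ (k * (k - 1)) * q ^ (2 * k)"
    by (simp only: diff_Suc_1 nat_aux1 power_add)
  then show ?thesis unfolding bb_def PP_Suc by (simp add: field_simps)
qed

lemma q2_lt: fixes q :: real assumes "0 < q" "q < 1" shows "q ^ (2 * n) \<le> 1" "q ^ (2 * Suc n) < 1" "0 < q ^ (2 * n)"
proof -
  show "q ^ (2 * n) \<le> 1" using assms by (simp add: power_le_one_iff)
  show "q ^ (2 * Suc n) < 1" using power_strict_decreasing[of 0 "2*Suc n" q] assms by simp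
  show "0 < q ^ (2 * n)" using assms by simp
qed

lemma bb_summable_abs: assumes "0 < q" "q < 1"
  shows "summable (\<lambda>k. \<bar>bb q k * z ^ k\<bar>)"
proof -
  define e :: real where "e = 1 / (4 * (\<bar>z\<bar> + 1))"
  have e0: "e > 0" unfolding e_def by simp
  have "(\<lambda>n. (q^2) ^ n) \<longlonglongrightarrow> 0"
    using assms by (intro LIMSEQ_power_zero) (simp add: power_less_one_iff abs_less_iff)
  then have "eventually (\<lambda>n. (q^2) ^ n < e) sequentially"
    using e0 by (rule order_tendstoD(2))
  then obtain N where N: "\<And>n. n \<ge> N \<Longrightarrow> (q^2) ^ n < e"
    unfolding eventually_sequentially by blast
  show ?thesis
  proof (rule summable_ratio_test[where c = "1/2" and N = N])
    fix n assume "n \<ge> N"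
    define r where "r = q ^ (2 * n)"
    define s where "s = q ^ (2 * Suc n)"
    have r: "r < e" using N[OF \<open>n \<ge> N\<close>] unfolding r_def by (simp add: power_mult)
    have r0: "0 < r" unfolding r_def using assms by simp
    have sr: "s \<le> r" unfolding r_def s_def using assms
      by (intro power_decreasing) auto
    have "e \<le> 1/4" unfolding e_def by (simp add: field_simps)
    then have s1: "1 - s \<ge> 1/2" using sr r by linarith
    have rz: "r * \<bar>z\<bar> \<le> 1/4"
    proof -
      have "r * \<bar>z\<bar> \<le> e * (\<bar>z\<bar> + 1)" using r r0
        by (intro mult_mono) auto
      also have "\<dots> = 1/4" unfolding e_def by (simp add: field_simps)
      finally show ?thesis .
    qed
    have ratio: "r * \<bar>z\<bar> / (1 - s) \<le> 1/2"
      using s1 rz by (simp add: pos_divide_le_eq)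
    have eq: "\<bar>bb q (Suc n) * z ^ Suc n\<bar> = \<bar>bb q n * z ^ n\<bar> * (r * \<bar>z\<bar> / (1 - s))"
    proof -
      have a1: "\<bar>1 - s\<bar> = 1 - s" "\<bar>r\<bar> = r" using s1 r0 by auto
      show ?thesis
        unfolding bb_Suc[OF assms] r_def[symmetric] s_def[symmetric]
        by (simp add: abs_mult abs_divide power_abs a1 abs_minus_commute)
    qed
    have "\<bar>bb q (Suc n) * z ^ Suc n\<bar> \<le> \<bar>bb q n * z ^ n\<bar> * (1/2)"
      unfolding eq by (rule mult_left_mono[OF ratio abs_ge_zero])
    then show "norm \<bar>bb q (Suc n) * z ^ Suc n\<bar> \<le> 1/2 * norm \<bar>bb q n * z ^ n\<bar>"
      by simp
  qed simp
qed

lemma bb_summable: assumes "0 < q" "q < 1" shows "summable (\<lambda>k. bb q k * z ^ k)"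
  using bb_summable_abs[OF assms] by (rule summable_rabs_cancel)

lemma FF_fe: assumes "0 < q" "q < 1" shows "FF q z = (1 - z) * FF q (q^2 * z)"
proof -
  define d where "d k = bb q k * z ^ k - bb q k * (q^2 * z) ^ k" for k
  have s1: "summable (\<lambda>k. bb q k * z ^ k)" "summable (\<lambda>k. bb q k * (q^2*z) ^ k)"
    using bb_summable[OF assms] by auto
  have sd: "d sums (FF q z - FF q (q^2 * z))"
    unfolding d_def FF_def using s1 by (intro sums_diff summable_sums)
  have hz: "(q^2*z)^k = q^(2*k)*z^k" for k by (simp add: power_mult_distrib power_mult)
  have dS: "d (Suc m) = - z * (bb q m * (q^2 * z) ^ m)" for m
  proof -
    have "d (Suc m) = bb q (Suc m) * (1 - q ^ (2 * Suc m)) * z ^ Suc m"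
      unfolding d_def hz by (simp only: algebra_simps)
    also have "bb q (Suc m) * (1 - q ^ (2 * Suc m)) = - bb q m * q ^ (2 * m)"
      unfolding bb_Suc[OF assms] using q2_lt(2)[OF assms, of m] by simp
    finally show ?thesis unfolding hz by (simp add: algebra_simps)
  qed
  have "(\<lambda>m. d (Suc m)) sums (FF q z - FF q (q^2 * z) - d 0)"
    using sd by (subst sums_Suc_iff) simp
  moreover have "(\<lambda>m. d (Suc m)) sums (- z * FF q (q^2 * z))"
    unfolding dS FF_def using s1(2) by (intro sums_mult summable_sums)
  moreover have "d 0 = 0" unfolding d_def by simp
  ultimately have "FF q z - FF q (q^2 * z) = - z * FF q (q^2 * z)"
    using sums_unique2 by fastforce
  then show ?thesis by (simp add: algebra_simps)
qed

lemma FF_0: "FF q 0 = 1"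
  unfolding FF_def by (simp only: powser_zero) (simp add: bb_def PP_def)

lemma FF_1: assumes "0 < q" "q < 1" shows "FF q 1 = 0"
  using FF_fe[OF assms, of 1] by simp

lemma FF_cont: assumes "0 < q" "q < 1" shows "isCont (FF q) x"
proof -
  have "isCont (\<lambda>x. \<Sum>n. bb q n * x ^ n) x"
    by (rule isCont_powser_converges_everywhere) (rule bb_summable[OF assms])
  then show ?thesis unfolding FF_def[abs_def] .
qed

lemma FF_lim: assumes "0 < q" "q < 1" shows "(\<lambda>N. FF q (q ^ (2 * N))) \<longlonglongrightarrow> 1"
proof -
  have "(\<lambda>N. (q^2) ^ N) \<longlonglongrightarrow> 0"
    using assms by (intro LIMSEQ_power_zero) (simp add: power_less_one_iff abs_less_iff)
  then have "(\<lambda>N. FF q ((q^2) ^ N)) \<longlonglongrightarrow> FF q 0"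
    by (rule isCont_tendsto_compose[OF FF_cont[OF assms]])
  then show ?thesis by (simp add: FF_0 power_mult)
qed

lemma FF_rec: assumes "0 < q" "q < 1"
  shows "FF q (q ^ (2 * j)) = (1 - q ^ (2 * j)) * FF q (q ^ (2 * Suc j))"
  using FF_fe[OF assms, of "q ^ (2 * j)"] by (simp add: power_add[symmetric])

lemma FF_prod: assumes "0 < q" "q < 1"
  shows "FF q (q ^ (2 * m)) = (\<Prod>i\<in>{m..<m+M}. (1 - q ^ (2 * i))) * FF q (q ^ (2 * (m + M)))"
proof (induction M)
  case 0 then show ?case by simp
next
  case (Suc M)
  show ?case unfolding Suc.IH
    by (subst FF_rec[OF assms, of "m + M"]) (simp add: prod.atLeastLessThan_Suc algebra_simps)
qed

lemma FF_pos: assumes "0 < q" "q < 1" "m \<ge> 1" shows "FF q (q ^ (2 * m)) > 0"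
proof -
  have "eventually (\<lambda>N. FF q (q ^ (2 * N)) > 0) sequentially"
    using FF_lim[OF assms(1,2)] by (rule order_tendstoD(1)) simp
  then obtain N where N: "\<And>n. n \<ge> N \<Longrightarrow> FF q (q ^ (2 * n)) > 0"
    unfolding eventually_sequentially by blast
  have "(\<Prod>i\<in>{m..<m+N}. (1 - q ^ (2 * i))) > 0"
  proof (rule prod_pos)
    fix i assume "i \<in> {m..<m+N}"
    then have "q ^ (2 * i) < 1" using assms by (subst power_less_one_iff) auto
    then show "0 < 1 - q ^ (2 * i)" by simp
  qed
  then show ?thesis unfolding FF_prod[OF assms(1,2), of m N] using N[of "m+N"] by simp
qed

definition BB :: "real \<Rightarrow> real" where "BB q = (\<Sum>k. \<bar>bb q k\<bar>)"

lemma FF_bound: assumes "0 < q" "q < 1" "\<bar>z\<bar> \<le> 1" shows "\<bar>FF q z\<bar> \<le> BB q"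
proof -
  have s: "summable (\<lambda>k. \<bar>bb q k\<bar>)" using bb_summable_abs[OF assms(1,2), of 1] by simp
  have "\<bar>FF q z\<bar> \<le> (\<Sum>k. \<bar>bb q k * z ^ k\<bar>)"
    unfolding FF_def by (rule summable_rabs[OF bb_summable_abs[OF assms(1,2)]])
  also have "\<dots> \<le> BB q" unfolding BB_def
  proof (rule suminf_le[OF _ bb_summable_abs[OF assms(1,2)] s])
    fix k
    have "\<bar>z\<bar> ^ k \<le> 1" using assms(3) by (intro power_le_one) auto
    then show "\<bar>bb q k * z ^ k\<bar> \<le> \<bar>bb q k\<bar>"
      by (simp add: abs_mult power_abs mult_left_le)
  qed
  finally show ?thesis .
qed

definition GG :: "real \<Rightarrow> nat \<Rightarrow> real" where "GG q j = FF q (q ^ (2 * j))"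

lemma GG_bound: fixes q :: real assumes "0 < q" "q < 1" shows "\<bar>GG q j\<bar> \<le> BB q"
  unfolding GG_def using q2_lt[OF assms] assms by (intro FF_bound) auto

lemma GG_rec: fixes q :: real assumes "0 < q" "q < 1"
  shows "GG q j = GG q (Suc j) - (q^2) ^ j * GG q (Suc j)"
  using FF_rec[OF assms, of j] unfolding GG_def power_mult by (simp add: algebra_simps)

lemma summ_geo: fixes q s :: real assumes "0 < q" "q < 1" "0 \<le> s" "s < 1"
  shows "summable (\<lambda>j. s ^ j * GG q (f j))"
proof (rule summable_comparison_test'[where N = 0])
  show "summable (\<lambda>j. BB q * s ^ j)" using assms by (intro summable_mult summable_geometric) simp
  fix j :: nat
  show "norm (s ^ j * GG q (f j)) \<le> BB q * s ^ j"
  proof -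
    have "s ^ j * \<bar>GG q (f j)\<bar> \<le> s ^ j * BB q"
      using GG_bound[OF assms(1,2), of "f j"] assms(3) by (intro mult_left_mono) auto
    then show ?thesis using assms(3) by (simp add: abs_mult mult.commute)
  qed
qed

lemma T_step: fixes q s :: real assumes q: "0 < q" "q < 1" and s: "0 \<le> s" "s < 1"
  shows "(\<Sum>j. (s * q^2) ^ j * GG q (Suc j)) = (1 - s) * (\<Sum>j. s ^ j * GG q (Suc j))"
proof -
  define x where "x = q^2"
  have x: "0 \<le> x" "x < 1" unfolding x_def using q by (auto simp: power_less_one_iff)
  have sx: "0 \<le> s * x" "s * x < 1" using s x by (auto intro: mult_nonneg_nonneg)
    (metis le_less_trans mult_left_le_one_le less_imp_le s(1) s(2) x(1) x(2))
  define T where "T s' = (\<Sum>j. s' ^ j * GG q (Suc j))" for s'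
  define U where "U = (\<Sum>j. s ^ j * GG q (Suc (Suc j)))"
  define W where "W = (\<Sum>j. x * ((s * x) ^ j * GG q (Suc (Suc j))))"
  have sU: "summable (\<lambda>j. s ^ j * GG q (Suc (Suc j)))" using summ_geo[OF q s] .
  have sW0: "summable (\<lambda>j. (s * x) ^ j * GG q (Suc (Suc j)))" using summ_geo[OF q sx] .
  have sW: "summable (\<lambda>j. x * ((s * x) ^ j * GG q (Suc (Suc j))))" using summable_mult[OF sW0] .
  have sT: "summable (\<lambda>j. s ^ j * GG q (Suc j))" using summ_geo[OF q s] .
  have sTx: "summable (\<lambda>j. (s * x) ^ j * GG q (Suc j))" using summ_geo[OF q sx] .
  have termeq: "s ^ j * GG q (Suc j) = s ^ j * GG q (Suc (Suc j)) - x * ((s * x) ^ j * GG q (Suc (Suc j)))" for j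
    by (subst GG_rec[OF q, of "Suc j"]) (simp add: x_def power_mult_distrib algebra_simps)
  have TUW: "T s = U - W" unfolding T_def U_def W_def termeq
    by (rule suminf_diff[OF sU sW, symmetric])
  have "s * U = (\<Sum>j. s ^ Suc j * GG q (Suc (Suc j)))"
    unfolding U_def using suminf_mult[OF sU, of s] by (simp add: algebra_simps)
  also have "\<dots> = T s - GG q 1" unfolding T_def using suminf_split_head[OF sT] by simp
  finally have sU': "s * U = T s - GG q 1" .
  have "s * W = (\<Sum>j. (s * x) ^ Suc j * GG q (Suc (Suc j)))"
    unfolding W_def using suminf_mult[OF sW, of s] by (simp add: algebra_simps)
  also have "\<dots> = T (s * x) - GG q 1" unfolding T_def using suminf_split_head[OF sTx] by simp
  finally have sW': "s * W = T (s * x) - GG q 1" .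
  have "s * T s = s * U - s * W" by (simp add: TUW algebra_simps)
  then have "s * T s = T s - T (s * x)" using sU' sW' by linarith
  then have "T (s * x) = (1 - s) * T s" by (simp add: algebra_simps)
  then show ?thesis unfolding T_def x_def .
qed

lemma T0: fixes q :: real assumes q: "0 < q" "q < 1"
  shows "(\<lambda>j. (q^2) ^ j * GG q (Suc j)) sums 1"
proof -
  have "(\<lambda>j. GG q j) \<longlonglongrightarrow> 1" unfolding GG_def by (rule FF_lim[OF q])
  then have "(\<lambda>j. GG q (Suc j) - GG q j) sums (1 - GG q 0)" by (rule telescope_sums)
  moreover have "GG q 0 = 0" unfolding GG_def using FF_1[OF q] by simp
  moreover have "GG q (Suc j) - GG q j = (q^2) ^ j * GG q (Suc j)" for j
    using GG_rec[OF q, of j] by linarith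
  ultimately show ?thesis by simp
qed

lemma T_val: fixes q :: real assumes q: "0 < q" "q < 1"
  shows "(\<Sum>j. (q ^ (2 * (n + 1))) ^ j * GG q (Suc j)) = PP q n"
proof (induction n)
  case 0 then show ?case using sums_unique[OF T0[OF q]] by (simp add: PP_def)
next
  case (Suc n)
  have s: "0 \<le> q ^ (2 * (n + 1))" "q ^ (2 * (n + 1)) < 1" using q2_lt[OF q, of n] q by auto
  have e: "q ^ (2 * (Suc n + 1)) = q ^ (2 * (n + 1)) * q^2" by (simp add: power_add[symmetric])
  show ?case unfolding e T_step[OF q s] Suc.IH PP_Suc by (simp add: algebra_simps)
qed

lemma exp_range_pos: "exp ` UNIV = {0::real<..}"
proof
  show "exp ` UNIV \<subseteq> {0::real<..}" by auto
  show "{0::real<..} \<subseteq> exp ` UNIV"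
  proof
    fix x :: real assume "x \<in> {0<..}"
    then have "x = exp (ln x)" by simp
    then show "x \<in> exp ` UNIV" by blast
  qed
qed

lemma tri_real: "real (n * (n + 1) div 2) = real n * (real n + 1) / 2"
proof -
  have "even (n * (n + 1))" by simp
  then have "real (n * (n + 1) div 2) = real (n * (n + 1)) / 2" by (simp only: real_of_nat_div)
  then show ?thesis by (simp add: algebra_simps)
qed

lemma lognormal_moment:
  fixes q a :: real and n :: nat
  assumes q: "0 < q" "q < 1" and a: "0 < a"
  shows "((\<lambda>t. t ^ n * qg q (t * a)) has_integral
           (inverse q ^ (n * (n + 1) div 2) * inverse a ^ (n + 1))) {0<..}"
proof -
  define l where "l = - ln q"
  have l0: "l > 0" unfolding l_def using q by simp
  define \<sigma> where "\<sigma> = sqrt l"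
  have sig0: "\<sigma> > 0" unfolding \<sigma>_def using l0 by simp
  have s2: "\<sigma>\<^sup>2 = l" unfolding \<sigma>_def using l0 by simp
  define \<mu> where "\<mu> = ln q / 2 - ln a"
  define k :: real where "k = real (n + 1)"
  define Kc where "Kc = exp (k * \<mu> + k\<^sup>2 * l / 2)"
  define f where "f t = t ^ n * qg q (t * a)" for t :: real
  have abslq: "\<bar>ln q\<bar> = l" unfolding l_def using q by simp
  have qg_eq: "qg q (exp u * a) = normal_density \<mu> \<sigma> u" for u
  proof -
    have "ln (exp u * a / sqrt q) = u - \<mu>"
      using q a by (simp add: ln_div ln_mult ln_sqrt \<mu>_def)
    then show ?thesis unfolding qg_def normal_density_def s2 abslq by simp
  qed
  have expk: "exp u * exp u ^ n = exp (k * u)" for u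
  proof -
    have "exp u ^ n = exp (real n * u)" by (rule exp_of_nat_mult[symmetric])
    then show ?thesis unfolding k_def by (simp add: exp_add[symmetric] algebra_simps)
  qed
  have shift: "exp (k * u) * normal_density \<mu> \<sigma> u = Kc * normal_density (\<mu> + k * l) \<sigma> u" for u
  proof -
    have "k * u + (- (u - \<mu>)\<^sup>2 / (2 * l)) = (k * \<mu> + k\<^sup>2 * l / 2) + (- (u - (\<mu> + k * l))\<^sup>2 / (2 * l))"
      using l0 by (simp add: field_simps power2_eq_square)
    then have "exp (k * u) * exp (- (u - \<mu>)\<^sup>2 / (2 * l)) = Kc * exp (- (u - (\<mu> + k * l))\<^sup>2 / (2 * l))"
      unfolding Kc_def by (simp only: exp_add[symmetric])
    then show ?thesis unfolding normal_density_def s2 by (simp add: algebra_simps)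
  qed
  have cov: "\<bar>exp u\<bar> * f (exp u) = Kc * normal_density (\<mu> + k * l) \<sigma> u" for u
    unfolding f_def qg_eq shift[symmetric] expk[symmetric] by (simp add: algebra_simps)
  have Kc0: "Kc > 0" unfolding Kc_def by simp
  have intL: "integrable lborel (\<lambda>u. Kc * normal_density (\<mu> + k * l) \<sigma> u)"
    using integrable_normal_density[OF sig0] by simp
  have hi: "((\<lambda>u. Kc * normal_density (\<mu> + k * l) \<sigma> u) has_integral Kc) UNIV"
    using has_integral_integral_lborel[OF intL] integral_normal_density[OF sig0] by simp
  have ai: "(\<lambda>u. \<bar>exp u\<bar> * f (exp u)) absolutely_integrable_on UNIV \<and>
            integral UNIV (\<lambda>u. \<bar>exp u\<bar> * f (exp u)) = Kc"
    unfolding cov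
  proof
    show "(\<lambda>u. Kc * normal_density (\<mu> + k * l) \<sigma> u) absolutely_integrable_on UNIV"
      using hi Kc0 by (intro nonnegative_absolutely_integrable_1) (auto simp: has_integral_integrable)
    show "integral UNIV (\<lambda>u. Kc * normal_density (\<mu> + k * l) \<sigma> u) = Kc"
      using hi by (rule integral_unique)
  qed
  have "f absolutely_integrable_on (exp ` UNIV) \<and> integral (exp ` UNIV) f = Kc"
    by (rule has_absolute_integral_change_of_variables_1'[where S=UNIV and g=exp and g'=exp and f=f and b=Kc, THEN iffD1, OF _ _ _ ai])
       (auto intro!: derivative_eq_intros simp: inj_on_def)
  then have fi: "f absolutely_integrable_on {0<..}" "integral {0<..} f = Kc"
    unfolding exp_range_pos by auto
  have "(f has_integral Kc) {0<..}"
    using set_lebesgue_integral_eq_integral(1)[OF fi(1)] fi(2) by (metis has_integral_integral)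
  moreover have "Kc = inverse q ^ (n * (n + 1) div 2) * inverse a ^ (n + 1)"
  proof -
    have e1: "inverse q ^ (n * (n + 1) div 2) = exp (real (n * (n + 1) div 2) * ln (inverse q))"
      using q by (simp add: exp_of_nat_mult)
    have e2: "inverse a ^ (n + 1) = exp (real (n + 1) * ln (inverse a))"
      using a by (subst exp_of_nat_mult) simp
    have "k * \<mu> + k\<^sup>2 * l / 2 = real (n * (n + 1) div 2) * ln (inverse q) + real (n + 1) * ln (inverse a)"
    proof -
      have li: "ln (inverse q) = - ln q" "ln (inverse a) = - ln a" using q a by (auto simp: ln_inverse)
      show ?thesis unfolding tri_real k_def \<mu>_def l_def li
        by (simp add: field_simps power2_eq_square)
    qed
    then show ?thesis unfolding e1 e2 Kc_def by (simp only: exp_add[symmetric])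
  qed
  ultimately show ?thesis unfolding f_def by simp
qed

lemma cpos: fixes q :: real assumes "0 < q" "q < 1" shows "inverse q - q > 0"
proof -
  have "q*q < 1*1" using assms by (intro mult_strict_mono) auto
  then show ?thesis using assms by (simp add: field_simps)
qed

lemma nat_aux2: "2 * (k * (k + 1) div 2) + 2 * j * k = k * (k - 1) + 2 * Suc j * k"
proof -
  have "even (k * (k + 1))" by simp
  then have A: "2 * (k * (k + 1) div 2) = k * (k + 1)" by simp
  have B: "k * (k + 1) + 2 * j * k = k * (k - 1) + 2 * Suc j * k"
    by (cases k) (simp_all add: algebra_simps)
  show ?thesis unfolding A B ..
qed

lemma h1: "(A::real) \<noteq> 0 \<Longrightarrow> C \<noteq> 0 \<Longrightarrow> A * (S * Y / C) / (inverse A * P / C) = S * (A * A * Y) / P"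
  by (simp add: field_simps)

lemma qE_eq: fixes q :: real assumes q: "0 < q" "q < 1"
  shows "qE q (- (q ^ (2 * j)) / (inverse q - q)) = GG q (Suc j)"
proof -
  define c where "c = inverse q - q"
  have c0: "c > 0" unfolding c_def using cpos[OF q] .
  have termeq: "q ^ (k * (k + 1) div 2) * (- (q ^ (2 * j)) / c) ^ k / qfact q k
        = bb q k * (q ^ (2 * Suc j)) ^ k" for k
  proof -
    define T where "T = k * (k + 1) div 2"
    have P0: "PP q k > 0" using PP_pos[OF q] .
    have "q ^ T * (- (q ^ (2 * j)) / c) ^ k / qfact q k
        = q ^ T * ((-1) ^ k * q ^ (2 * j * k) / c ^ k) / (inverse (q ^ T) * PP q k / c ^ k)"
    proof -
      have e1: "(- (q^(2*j)) / c)^k = (- (q^(2*j)))^k / c^k" by (rule power_divide)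
      have e2: "(- (q^(2*j)))^k = (-1)^k * (q^(2*j))^k" by (rule power_minus)
      have e3: "(q^(2*j))^k = q^(2*j*k)" by (rule power_mult[symmetric])
      show ?thesis
        unfolding qfact_eq[OF q] c_def[symmetric] T_def[symmetric] power_inverse e1 e2 e3 ..
    qed
    also have "\<dots> = (-1) ^ k * (q ^ T * q ^ T * q ^ (2 * j * k)) / PP q k"
      by (rule h1) (use c0 q in auto)
    also have "q ^ T * q ^ T * q ^ (2 * j * k) = q ^ (k * (k - 1)) * (q ^ (2 * Suc j)) ^ k"
    proof -
      have "q ^ T * q ^ T * q ^ (2 * j * k) = q ^ (2 * T + 2 * j * k)"
        by (simp add: power_add mult_2)
      also have "\<dots> = q ^ (k * (k - 1) + 2 * Suc j * k)" unfolding T_def nat_aux2 ..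
      also have "\<dots> = q ^ (k * (k - 1)) * (q ^ (2 * Suc j)) ^ k"
        unfolding power_add power_mult[of q "2*Suc j" k] ..
      finally show ?thesis .
    qed
    finally show ?thesis unfolding T_def bb_def by simp
  qed
  show ?thesis unfolding qE_def GG_def FF_def c_def[symmetric] termeq ..
qed

lemma qg_pos: fixes q :: real assumes "0 < q" "q < 1" shows "qg q x > 0"
proof -
  have A: "2 * pi * \<bar>ln q\<bar> > 0" using assms pi_gt_zero by (intro mult_pos_pos) auto
  show ?thesis unfolding qg_def
    by (intro mult_pos_pos divide_pos_pos real_sqrt_gt_zero exp_gt_zero A) simp
qed

lemma qw_term_eq: fixes q :: real assumes q: "0 < q" "q < 1"
  shows "qw_term q t j = GG q (Suc j) * qg q (t * ((inverse q - q) / q ^ (2 * j)))"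
  unfolding qw_term_def qE_eq[OF q] by simp

lemma qw_term_pos: fixes q :: real assumes q: "0 < q" "q < 1"
  shows "qw_term q t j > 0"
  unfolding qw_term_eq[OF q] GG_def using FF_pos[OF q, of "Suc j"] qg_pos[OF q] by simp

lemma qw_term_summable: fixes q :: real assumes q: "0 < q" "q < 1" and t: "t > 0"
  shows "summable (qw_term q t)"
proof -
  define c where "c = inverse q - q"
  have c0: "c > 0" unfolding c_def using cpos[OF q] .
  define l where "l = - ln q"
  have l0: "l > 0" unfolding l_def using q by simp
  define L0 where "L0 = ln (t * c) + l / 2"
  define C where "C = 1 / sqrt (2 * pi * l)"
  define N where "N = nat \<lceil>(1 - L0) / (2 * l)\<rceil>"
  define K where "K = C * BB q * exp (- L0 / (2 * l))"
  show ?thesis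
  proof (rule summable_comparison_test'[where N = N])
    show "summable (\<lambda>j. K * exp (-1) ^ j)" by (intro summable_mult summable_geometric) simp
    fix j assume jN: "j \<ge> N"
    define y where "y = L0 + 2 * real j * l"
    have "real j \<ge> (1 - L0) / (2 * l)" using jN unfolding N_def by linarith
    then have "2 * real j * l \<ge> 1 - L0" using l0 by (simp add: field_simps)
    then have y1: "y \<ge> 1" unfolding y_def by simp
    have yy: "y\<^sup>2 \<ge> y" using y1 by (simp add: power2_eq_square)
    have lny: "ln (t * c / q ^ (2 * j) / sqrt q) = y"
    proof -
      have p1: "t * c / q ^ (2 * j) > 0" "sqrt q > 0" "t * c > 0" "q ^ (2 * j) > 0" using q t c0 by auto
      have "ln (t * c / q ^ (2 * j) / sqrt q) = ln (t * c) - ln (q ^ (2 * j)) - ln (sqrt q)"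
      proof -
        have n1: "t * c / q ^ (2 * j) \<noteq> 0" "sqrt q \<noteq> 0" "t * c \<noteq> 0" "q ^ (2 * j) \<noteq> 0"
          using p1 by auto
        show ?thesis by (simp only: ln_div n1 simp_thms if_True)
      qed
      also have "ln (q ^ (2 * j)) = real (2 * j) * ln q" using q by (simp add: ln_realpow)
      also have "ln (sqrt q) = ln q / 2" using q by (simp add: ln_sqrt)
      finally show ?thesis unfolding y_def L0_def l_def by simp
    qed
    have qgv: "qg q (t * c / q ^ (2 * j)) = C * exp (- y\<^sup>2 / (2 * l))"
      unfolding qg_def lny C_def using q by (simp add: l_def)
    have "exp (- y\<^sup>2 / (2 * l)) \<le> exp (- y / (2 * l))"
      using yy l0 by (simp add: divide_right_mono)
    also have "exp (- y / (2 * l)) = exp (- L0 / (2 * l)) * exp (-1) ^ j"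
    proof -
      have eqy: "- y / (2 * l) = - L0 / (2 * l) + real j * (-1)"
        unfolding y_def using l0 by (simp add: field_simps)
      have ee: "exp (-1) ^ j = exp (real j * (-1))" by (rule exp_of_nat_mult[symmetric])
      show ?thesis unfolding eqy exp_add ee ..
    qed
    finally have ge: "exp (- y\<^sup>2 / (2 * l)) \<le> exp (- L0 / (2 * l)) * exp (-1) ^ j" .
    have C0: "C > 0" unfolding C_def using l0 by simp
    have "norm (qw_term q t j) = qg q (t * c / q ^ (2 * j)) * \<bar>GG q (Suc j)\<bar>"
      unfolding qw_term_eq[OF q] c_def using abs_of_pos[OF qg_pos[OF q]] by (simp add: abs_mult)
    also have "\<dots> \<le> (C * (exp (- L0 / (2 * l)) * exp (-1) ^ j)) * BB q"
      unfolding qgv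
      by (intro mult_mono mult_left_mono ge GG_bound[OF q]) (use C0 in auto)
    also have "\<dots> = K * exp (-1) ^ j" unfolding K_def by simp
    finally show "norm (qw_term q t j) \<le> K * exp (-1) ^ j" .
  qed
qed

theorem mainTheorem1:
  fixes q :: real
  assumes "0 < q" and "q < 1"
  shows "(\<forall>t>0. summable (qw_term q t) \<and> qw q t > 0) \<and>
         (\<forall>n::nat. ((\<lambda>t. t ^ n * qw q t) has_integral qfact q n) {0<..})"
proof -
  have q: "0 < q" "q < 1" using assms by auto
  define c where "c = inverse q - q"
  have c0: "c > 0" unfolding c_def using cpos[OF q] .
  have part1: "\<forall>t>0. summable (qw_term q t) \<and> qw q t > 0"
  proof (intro allI impI conjI)
    fix t :: real assume t: "t > 0"
    show "summable (qw_term q t)" using qw_term_summable[OF q t] .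
    show "qw q t > 0" unfolding qw_def c_def[symmetric]
      using c0 suminf_pos[OF qw_term_summable[OF q t] qw_term_pos[OF q]] by simp
  qed
  have part2: "((\<lambda>t. t ^ n * qw q t) has_integral qfact q n) {0<..}" for n
  proof -
    define S :: "real set" where "S = {0<..}"
    define K where "K = inverse q ^ (n * (n + 1) div 2)"
    define a where "a j = c / q ^ (2 * j)" for j
    have a0: "a j > 0" for j unfolding a_def using c0 q by simp
    define h where "h j t = t ^ n * (c * qw_term q t j)" for j t
    define v where "v j = (K / c ^ n) * ((q ^ (2 * (n + 1))) ^ j * GG q (Suc j))" for j
    have hint: "(h j has_integral v j) S" for j
    proof -
      have "((\<lambda>t. (c * GG q (Suc j)) * (t ^ n * qg q (t * a j))) has_integral
              (c * GG q (Suc j)) * (K * inverse (a j) ^ (n + 1))) S"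
        unfolding S_def K_def by (intro has_integral_mult_right lognormal_moment q a0)
      moreover have "h j = (\<lambda>t. (c * GG q (Suc j)) * (t ^ n * qg q (t * a j)))"
        by (rule ext) (simp add: h_def qw_term_eq[OF q] a_def c_def algebra_simps)
      moreover have "(c * GG q (Suc j)) * (K * inverse (a j) ^ (n + 1)) = v j"
      proof -
        have "inverse (a j) ^ (n + 1) = (q ^ (2 * (n + 1))) ^ j / c ^ (n + 1)"
        proof -
          have e1: "inverse (a j) = q ^ (2 * j) / c" unfolding a_def by simp
          have e2: "(q ^ (2 * j)) ^ (n + 1) = (q ^ (2 * (n + 1))) ^ j"
            unfolding power_mult[symmetric] by (simp only: ac_simps)
          show ?thesis unfolding e1 power_divide e2 ..
        qed
        note ee = this
        show ?thesis unfolding v_def ee using c0 by (simp add: field_simps)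
      qed
      ultimately show ?thesis by simp
    qed
    define f where "f N t = (\<Sum>j<N. h j t)" for N t
    have fint: "(f N has_integral (\<Sum>j<N. v j)) S" for N
      unfolding f_def[abs_def] by (intro has_integral_sum) (auto intro: hint)
    have hpos: "h j t \<ge> 0" if "t \<in> S" for j t
      using that qw_term_pos[OF q, of t j] c0 unfolding h_def S_def by simp
    have vsums: "v sums ((K / c ^ n) * PP q n)"
    proof -
      have s: "0 \<le> q ^ (2 * (n + 1))" "q ^ (2 * (n + 1)) < 1" using q2_lt[OF q, of n] q by auto
      have "(\<lambda>j. (q ^ (2 * (n + 1))) ^ j * GG q (Suc j)) sums PP q n"
        using summ_geo[OF q s, of Suc] T_val[OF q, of n] by (metis summable_sums)
      then show ?thesis unfolding v_def by (rule sums_mult)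
    qed
    have intf: "(\<lambda>N. integral S (f N)) = (\<lambda>N. \<Sum>j<N. v j)"
      using fint by (simp add: integral_unique fun_eq_iff)
    have mc: "(\<lambda>t. t ^ n * qw q t) integrable_on S \<and>
       ((\<lambda>N. integral S (f N)) \<longlonglongrightarrow> integral S (\<lambda>t. t ^ n * qw q t))"
    proof (rule monotone_convergence_increasing)
      show "f N integrable_on S" for N using fint by blast
      show "f N t \<le> f (Suc N) t" if "t \<in> S" for N t
        unfolding f_def using hpos[OF that, of N] by simp
      show "(\<lambda>N. f N t) \<longlonglongrightarrow> t ^ n * qw q t" if "t \<in> S" for t
      proof -
        have t: "t > 0" using that unfolding S_def by simp
        have "(\<lambda>N. (t ^ n * c) * (\<Sum>j<N. qw_term q t j)) \<longlonglongrightarrow> (t ^ n * c) * (\<Sum>j. qw_term q t j)"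
          by (intro tendsto_mult_left summable_LIMSEQ qw_term_summable[OF q t])
        moreover have "f N t = (t ^ n * c) * (\<Sum>j<N. qw_term q t j)" for N
          unfolding f_def h_def by (simp add: sum_distrib_left algebra_simps)
        moreover have "(t ^ n * c) * (\<Sum>j. qw_term q t j) = t ^ n * qw q t"
          unfolding qw_def c_def by simp
        ultimately show ?thesis by simp
      qed
      note intf
      moreover have "(\<lambda>N. \<Sum>j<N. v j) \<longlonglongrightarrow> (K / c ^ n) * PP q n"
        using vsums by (simp add: sums_def)
      ultimately show "bounded (range (\<lambda>N. integral S (f N)))"
        by (metis convergent_imp_bounded)
    qed
    have "(\<lambda>N. integral S (f N)) \<longlonglongrightarrow> (K / c ^ n) * PP q n"
      unfolding intf using vsums by (simp add: sums_def)
    then have "integral S (\<lambda>t. t ^ n * qw q t) = (K / c ^ n) * PP q n"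
      using mc LIMSEQ_unique by blast
    also have "\<dots> = qfact q n" unfolding qfact_eq[OF q] K_def c_def by simp
    finally show ?thesis using mc unfolding S_def by (metis has_integral_integral)
  qed
  show ?thesis using part1 part2 by blast
qed

end
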